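(* Consider Method 2.2 (described in the context) and suppose it does not terminate and the numbers $\varepsilon_k>0$ satisfy $\varepsilon_k\to0$. Then the sequences $\{x_k\},\{\sigma_k\}$ are defined for all $k\in K$ and $\lim_{k\to\infty}f(x_k)=f^*$, $\lim_{k\to\infty}\sigma_k=f^*$.
   Context: Setting: $D\subset\mathbb{R}^n$ closed convex; $f$ convex on $\mathbb{R}^n$ attaining its minimum $f^*$ on $D$; $X^*=\{x\in D:f(x)=f^*\}$; $K=\{0,1,\dots\}$; $\operatorname{epi}(f,\mathbb{R}^n)=\{(x,\gamma):\gamma\ge f(x)\}$; for $Q\subset\mathbb{R}^{n+1}$, $W^1(u,Q)=\{a\in\mathbb{R}^{n+1}:\|a\|=1,\ \langle a,z-u\rangle\le0\ \forall z\in Q\}$; $J=\{1,\dots,m\}$. Method 2.2: fix $x^*\in X^*$; choose $v^j\in\operatorname{int}\operatorname{epi}(f,\mathbb{R}^n)$ ($j\in J$), a closed convex bounded $G_0\subset D$ with $x^*\in G_0$, a closed convex $M_0\subset\mathbb{R}^{n+1}$ with $(x^*,f^* )\in M_0$, numbers $\varepsilon_0>0$, $\bar\gamma_0\le f^*$, a constant $q\ge1$; $i=k=0$. Step 1: $(y_i,\gamma_i)$ solves $\min\{\gamma: x\in G_i,\ (x,\gamma)\in M_i,\ \gamma\ge\bar\gamma_i\}$; if $f(y_i)=\gamma_i$ stop. Step 2: if $f(y_i)-\gamma_i>\varepsilon_k$, choose closed convex $Q_i\subset M_i$ with $(x^*,f^* )\in Q_i$, set $u_i=y_i$ and go to Step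 4. Step 3: choose closed convex $Q_i\ni(x^*,f^* )$; choose $x_k\in G_i$ with $f(x_k)\le f(y_i)$; set $i_k=i$, $\sigma_k=\gamma_{i_k}$, $u_i=x_k$; choose $\varepsilon_{k+1}>0$; $k\leftarrow k+1$. Step 4: for each $j\in J$ choose $z_i^j$ in the open segment $(v^j,(u_i,\gamma_i))$ with $z_i^j\notin\operatorname{int}\operatorname{epi}(f,\mathbb{R}^n)$ such that $(u_i,\gamma_i)+q_i^j(z_i^j-(u_i,\gamma_i))\in\operatorname{epi}(f,\mathbb{R}^n)$ for some $q_i^j\in[1,q]$. Step 5: for $j\in J$ choose nonempty finite $A_i^j\subset W^1(z_i^j,\operatorname{epi}(f,\mathbb{R}^n))$; $M_{i+1}=Q_i\cap\bigcap_{j\in J}\{w\in\mathbb{R}^{n+1}:\langle a,w-z_i^j\rangle\le0\ \forall a\in A_i^j\}$. Step 6: choose closed convex $G_{i+1}\subset G_0$ with $x^*\in G_{i+1}$ and $\bar\gamma_{i+1}\in[\bar\gamma_0,f^*]$; $i\leftarrow i+1$; go to Step 1. *)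

theory Defs
  imports "HOL-Analysis.Analysis"
begin

definition epi :: "('a::euclidean_space \<Rightarrow> real) \<Rightarrow> ('a \<times> real) set" where
  "epi f = {(x, g). g \<ge> f x}"

definition W1 :: "'b::real_inner \<Rightarrow> 'b set \<Rightarrow> 'b set" where
  "W1 u Q = {a. norm a = 1 \<and> (\<forall>z\<in>Q. inner a (z - u) \<le> 0)}"

end

theory Submission
  imports Defs
begin

lemma cut_lemma:
  fixes a V z p :: "'b::real_inner"
  assumes a1: "norm a = 1" and cut: "\<forall>e\<in>E. inner a (e - z) \<le> 0"
    and ball: "ball V r \<subseteq> E" and r: "r > 0"
    and z: "z = (1-t) *\<^sub>R V + t *\<^sub>R p" and t: "0 < t" "t < 1"
  shows "inner a (p - z) \<ge> (1-t) * (r/2)"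
proof -
  have "V + (r/2) *\<^sub>R a \<in> ball V r" using a1 r by (simp add: dist_norm)
  hence "inner a (V + (r/2) *\<^sub>R a - z) \<le> 0" using cut ball by blast
  moreover have "inner a a = 1" using a1 by (simp add: norm_eq_sqrt_inner)
  moreover have "V + (r/2) *\<^sub>R a - z = (r/2) *\<^sub>R a - t *\<^sub>R (p - V)"
    using z by (simp add: algebra_simps)
  ultimately have h: "r/2 - t * inner a (p - V) \<le> 0"
    by (simp add: inner_diff_right)
  have "p - z = (1-t) *\<^sub>R (p - V)" using z by (simp add: algebra_simps)
  hence e: "inner a (p - z) = (1-t) * inner a (p - V)" by simp
  have "inner a (p - V) \<ge> r/2"
  proof -
    have "inner a (p - V) > 0"
    proof (rule ccontr)
      assume "\<not> inner a (p - V) > 0"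
      hence "t * inner a (p - V) \<le> 0" using t by (simp add: mult_nonneg_nonpos)
      thus False using h r by linarith
    qed
    hence "t * inner a (p - V) \<le> inner a (p - V)" using t
      by (simp add: mult_le_cancel_right1)
    thus ?thesis using h by linarith
  qed
  thus ?thesis using e t by (simp add: mult_left_mono)
qed

lemma step_lemma:
  fixes f :: "'a::real_normed_vector \<Rightarrow> real"
  assumes uc: "\<forall>x\<in>cball 0 R. \<forall>x'\<in>cball 0 R. dist x' x < d \<longrightarrow> dist (f x') (f x) < e/2"
    and y: "norm y \<le> R" and vx: "norm vx \<le> R"
    and gap: "f y - g > e"
    and epi: "f (y + l *\<^sub>R (vx - y)) \<le> g + l * (vg - g)"
    and l: "0 < l" and Bx: "norm (vx - y) \<le> Bx" and Bg: "\<bar>vg - g\<bar> \<le> Bg"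
    and "0 \<le> Bx" "0 \<le> Bg" "d > 0" "e > 0"
  shows "l \<ge> min 1 (min (d/(Bx+1)) (e/(2*(Bg+1))))"
proof (rule ccontr)
  assume "\<not> ?thesis"
  hence l1: "l < 1" and l2: "l < d/(Bx+1)" and l3: "l < e/(2*(Bg+1))" by auto
  have l2': "l * (Bx+1) < d" using l2 \<open>0 \<le> Bx\<close> by (simp add: field_simps)
  have l3': "l * (2*(Bg+1)) < e" using l3 \<open>0 \<le> Bg\<close> by (simp add: field_simps)
  define w where "w = y + l *\<^sub>R (vx - y)"
  have w2: "w = (1-l) *\<^sub>R y + l *\<^sub>R vx" unfolding w_def by (simp add: algebra_simps)
  have "norm w \<le> (1-l) * norm y + l * norm vx"
    unfolding w2 using l l1 by (metis abs_of_nonneg less_eq_real_def norm_scaleR norm_triangle_le diff_ge_0_iff_ge order_refl add_mono)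
  also have "\<dots> \<le> (1-l) * R + l * R" using l l1 y vx
    by (intro add_mono mult_left_mono) auto
  finally have wR: "norm w \<le> R" by (simp add: algebra_simps)
  have "dist w y = l * norm (vx - y)" unfolding w_def using l by (simp add: dist_norm)
  also have "\<dots> \<le> l * Bx" using Bx l by (simp add: mult_left_mono)
  also have "\<dots> < d" using l2' l by (smt (verit) mult_left_mono)
  finally have "dist (f w) (f y) < e/2" using uc wR y by auto
  hence "\<bar>f w - f y\<bar> < e/2" by (simp add: dist_real_def)
  hence A: "f y < f w + e/2" by arith
  have "l * (vg - g) \<le> l * Bg" using Bg l by (simp add: mult_left_mono abs_le_iff)
  also have "\<dots> < e/2" using l3' l by (simp add: algebra_simps)
  finally show False using A epi gap unfolding w_def by linarith
qed

theorem theorem2p2p3: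
  fixes f :: "'a::euclidean_space \<Rightarrow> real"
    and D :: "'a set" and xstar :: 'a and fstar :: real
    and m :: nat and v :: "nat \<Rightarrow> 'a \<times> real" and q :: real
    and G :: "nat \<Rightarrow> 'a set" and M Q :: "nat \<Rightarrow> ('a \<times> real) set"
    and gbar gam eps sigma :: "nat \<Rightarrow> real"
    and y u x :: "nat \<Rightarrow> 'a" and kk :: "nat \<Rightarrow> nat"
    and z :: "nat \<Rightarrow> nat \<Rightarrow> 'a \<times> real" and qq :: "nat \<Rightarrow> nat \<Rightarrow> real"
    and A :: "nat \<Rightarrow> nat \<Rightarrow> ('a \<times> real) set"
  assumes D: "closed D" "convex D"
    and f_convex: "convex_on UNIV f"
    and xstar: "xstar \<in> D" "f xstar = fstar" "\<forall>x\<in>D. fstar \<le> f x"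
    and m: "m \<ge> 1"
    and v: "\<forall>j\<in>{1..m}. v j \<in> interior (epi f)"
    and G0: "closed (G 0)" "convex (G 0)" "bounded (G 0)" "G 0 \<subseteq> D" "xstar \<in> G 0"
    and M0: "closed (M 0)" "convex (M 0)" "(xstar, fstar) \<in> M 0"
    and eps_pos: "\<forall>k. eps k > 0"
    and gbar0: "gbar 0 \<le> fstar"
    and q: "q \<ge> 1"
    and kk0: "kk 0 = 0"
    \<comment> \<open>Step 1: (y i, gam i) solves the auxiliary problem\<close>
    and step1: "\<forall>i. y i \<in> G i \<and> (y i, gam i) \<in> M i \<and> gam i \<ge> gbar i \<and>
        (\<forall>w g. w \<in> G i \<and> (w, g) \<in> M i \<and> g \<ge> gbar i \<longrightarrow> gam i \<le> g)"
    \<comment> \<open>the method does not terminate\<close>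
    and nonterm: "\<forall>i. f (y i) \<noteq> gam i"
    \<comment> \<open>Step 2\<close>
    and step2: "\<forall>i. f (y i) - gam i > eps (kk i) \<longrightarrow>
        closed (Q i) \<and> convex (Q i) \<and> Q i \<subseteq> M i \<and> (xstar, fstar) \<in> Q i \<and>
        u i = y i \<and> kk (Suc i) = kk i"
    \<comment> \<open>Step 3\<close>
    and step3: "\<forall>i. \<not> (f (y i) - gam i > eps (kk i)) \<longrightarrow>
        closed (Q i) \<and> convex (Q i) \<and> (xstar, fstar) \<in> Q i \<and>
        x (kk i) \<in> G i \<and> f (x (kk i)) \<le> f (y i) \<and> sigma (kk i) = gam i \<and>
        u i = x (kk i) \<and> kk (Suc i) = kk i + 1"
    \<comment> \<open>Step 4\<close>
    and step4: "\<forall>i. \<forall>j\<in>{1..m}. z i j \<in> open_segment (v j) (u i, gam i) \<and>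
        z i j \<notin> interior (epi f) \<and> qq i j \<in> {1..q} \<and>
        (u i, gam i) + qq i j *\<^sub>R (z i j - (u i, gam i)) \<in> epi f"
    \<comment> \<open>Step 5\<close>
    and step5: "\<forall>i. (\<forall>j\<in>{1..m}. finite (A i j) \<and> A i j \<noteq> {} \<and> A i j \<subseteq> W1 (z i j) (epi f)) \<and>
        M (Suc i) = Q i \<inter> (\<Inter>j\<in>{1..m}. {w. \<forall>a\<in>A i j. inner a (w - z i j) \<le> 0})"
    \<comment> \<open>Step 6\<close>
    and step6: "\<forall>i. closed (G (Suc i)) \<and> convex (G (Suc i)) \<and> G (Suc i) \<subseteq> G 0 \<and>
        xstar \<in> G (Suc i) \<and> gbar (Suc i) \<in> {gbar 0..fstar}"
    and eps_lim: "eps \<longlonglongrightarrow> 0"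
  shows "(\<forall>k. \<exists>i. k < kk i) \<and> (\<lambda>k. f (x k)) \<longlonglongrightarrow> fstar \<and> sigma \<longlonglongrightarrow> fstar"
proof -
  note st1 = step1[rule_format] and st2 = step2[rule_format] and st3 = step3[rule_format]
    and st6 = step6[rule_format] and st4 = step4[rule_format]
  have st5a: "finite (A i j) \<and> A i j \<noteq> {} \<and> A i j \<subseteq> W1 (z i j) (epi f)" if "j \<in> {1..m}" for i j
    using step5 that by blast
  have st5b: "M (Suc i) = Q i \<inter> (\<Inter>j\<in>{1..m}. {w. \<forall>a\<in>A i j. inner a (w - z i j) \<le> 0})" for i
    using step5 by blast
  have Gsub: "G i \<subseteq> G 0" for i using st6 by (cases i) auto
  have yD: "y i \<in> D" for i using st1[of i] Gsub[of i] G0(4) by blast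
  have fy: "fstar \<le> f (y i)" for i using yD xstar by blast
  have epiX: "(xstar, fstar) \<in> epi f" using xstar by (simp add: epi_def)
  have Qx: "(xstar, fstar) \<in> Q i" for i using st2[of i] st3[of i] by argo
  have MX: "(xstar, fstar) \<in> M i" for i
  proof (cases i)
    case 0 then show ?thesis using M0 by simp
  next
    case (Suc n)
    have "\<forall>j\<in>{1..m}. \<forall>a\<in>A n j. inner a ((xstar, fstar) - z n j) \<le> 0"
    proof (intro ballI)
      fix j a assume "j \<in> {1..m}" "a \<in> A n j"
      hence "a \<in> W1 (z n j) (epi f)" using st5a by blast
      thus "inner a ((xstar, fstar) - z n j) \<le> 0" using epiX unfolding W1_def by blast
    qed
    then show ?thesis using st5b[of n] Qx[of n] Suc by simp
  qed
  have gbar_le: "gbar i \<le> fstar" for i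
  proof (cases i)
    case (Suc n) then show ?thesis using st6[of n] by simp
  qed (use gbar0 in simp)
  have gbar_ge: "gbar 0 \<le> gbar i" for i
  proof (cases i)
    case (Suc n) then show ?thesis using st6[of n] by simp
  qed simp
  have xG: "xstar \<in> G i" for i
  proof (cases i)
    case (Suc n) then show ?thesis using st6[of n] by simp
  qed (use G0(5) in simp)
  have gle: "gam i \<le> fstar" for i
  proof -
    have "\<forall>w g. w \<in> G i \<and> (w, g) \<in> M i \<and> g \<ge> gbar i \<longrightarrow> gam i \<le> g"
      using conjunct2[OF conjunct2[OF conjunct2[OF st1[of i]]]] .
    then show ?thesis using MX[of i] xG[of i] gbar_le[of i] by simp
  qed
  have gge: "gbar 0 \<le> gam i" for i using st1[of i] gbar_ge[of i] by linarith
  have kkS: "kk (Suc i) = kk i \<or> kk (Suc i) = kk i + 1" for i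
  proof (cases "f (y i) - gam i > eps (kk i)")
    case True then show ?thesis using st2[of i] by simp
  next
    case False then show ?thesis using st3[of i] by simp
  qed
  have kkmono: "mono kk"
  proof (rule monoI)
    fix a b :: nat assume "a \<le> b"
    then show "kk a \<le> kk b"
    proof (induction b rule: dec_induct)
      case (step n) then show ?case using kkS[of n] by linarith
    qed simp
  qed
  have unb: "\<forall>k. \<exists>i. k < kk i"
  proof (rule ccontr)
    assume "\<not> (\<forall>k. \<exists>i. k < kk i)"
    then obtain K where K: "\<forall>i. kk i \<le> K" by (meson not_le)
    have fin: "finite (range kk)" using K by (intro finite_subset[OF _ finite_atMost[of K]]) auto
    have "Max (range kk) \<in> range kk" using fin by (intro Max_in) auto
    then obtain i0 where i0eq: "kk i0 = Max (range kk)" by auto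
    have i0: "kk i \<le> kk i0" for i using fin i0eq by (simp add: Max_ge)
    have kconst: "kk i = kk i0" if "i0 \<le> i" for i
      using i0[of i] monoD[OF kkmono that] by simp
    define e where "e = eps (kk i0)"
    have e: "e > 0" using eps_pos e_def by simp
    have s2: "f (y i) - gam i > e \<and> Q i \<subseteq> M i \<and> u i = y i" if "i0 \<le> i" for i
    proof -
      have "kk (Suc i) = kk i" using kconst[of i] kconst[of "Suc i"] that by simp
      hence "f (y i) - gam i > eps (kk i)" using st3[of i] by auto
      thus ?thesis using st2[of i] kconst[OF that] e_def by simp
    qed
    have Mmono: "M i' \<subseteq> M i" if "i0 \<le> i" "i \<le> i'" for i i'
      using that(2)
    proof (induction i' rule: dec_induct)
      case base then show ?case by simp
    next
      case (step n)
      have "M (Suc n) \<subseteq> Q n" using st5b[of n] by auto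
      also have "\<dots> \<subseteq> M n" using s2[of n] step that by simp
      finally show ?case using step by simp
    qed
    define V where "V = v 1"
    have one: "(1::nat) \<in> {1..m}" using m by simp
    obtain r where r: "r > 0" "ball V r \<subseteq> epi f"
      using v one unfolding V_def by (meson mem_interior)
    obtain B0 where B0: "\<forall>x\<in>G 0. norm x \<le> B0" using G0 bounded_iff by blast
    define R where "R = \<bar>B0\<bar> + norm (fst V)"
    have contf: "continuous_on UNIV f" using convex_on_continuous[OF open_UNIV f_convex] .
    have "uniformly_continuous_on (cball 0 R) f"
      using compact_uniformly_continuous[OF continuous_on_subset[OF contf] compact_cball] by simp
    then obtain d where d: "d > 0"
      "\<forall>x\<in>cball 0 R. \<forall>x'\<in>cball 0 R. dist x' x < d \<longrightarrow> dist (f x') (f x) < e/2"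
      unfolding uniformly_continuous_on_def using e by (meson half_gt_zero)
    define Bx where "Bx = 2 * R"
    define Bg where "Bg = \<bar>snd V\<bar> + \<bar>gbar 0\<bar> + \<bar>fstar\<bar>"
    define l0 where "l0 = min 1 (min (d/(Bx+1)) (e/(2*(Bg+1))))"
    have R0: "0 \<le> R" unfolding R_def by simp
    have l0: "l0 > 0" unfolding l0_def Bx_def Bg_def using d e R0 by auto
    define c where "c = l0 / q * (r/2)"
    have c: "c > 0" unfolding c_def using l0 q r by simp
    define p where "p = (\<lambda>i. (y i, gam i))"
    define a where "a = (\<lambda>i. SOME a. a \<in> A i 1)"
    have key: "c \<le> inner (a i) (p i - z i 1) \<and> (\<forall>i'. i < i' \<longrightarrow> inner (a i) (p i' - z i 1) \<le> 0)"
      if "i0 \<le> i" for i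
    proof -
      have Ane: "A i 1 \<noteq> {}" and AW: "A i 1 \<subseteq> W1 (z i 1) (epi f)" using st5a[OF one] by blast+
      have aA: "a i \<in> A i 1" unfolding a_def using Ane by (simp add: some_in_eq)
      have aW: "a i \<in> W1 (z i 1) (epi f)" using aA AW by blast
      have an: "norm (a i) = 1" and acut: "\<forall>w\<in>epi f. inner (a i) (w - z i 1) \<le> 0"
        using aW unfolding W1_def by auto
      have ui: "u i = y i" using s2 that by blast
      have st4: "z i 1 \<in> open_segment V (p i) \<and> qq i 1 \<in> {1..q} \<and>
          p i + qq i 1 *\<^sub>R (z i 1 - p i) \<in> epi f"
        using st4[OF one, of i] ui unfolding V_def p_def by auto
      then obtain t where t: "0 < t" "t < 1" "z i 1 = (1-t) *\<^sub>R V + t *\<^sub>R p i"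
        unfolding in_segment by blast
      have C1: "inner (a i) (p i - z i 1) \<ge> (1-t) * (r/2)"
        using cut_lemma[OF an acut r(2) r(1) t(3) t(1) t(2)] .
      define l where "l = qq i 1 * (1-t)"
      have qq: "1 \<le> qq i 1" "qq i 1 \<le> q" using st4 by auto
      have l: "l > 0" unfolding l_def using qq t by simp
      have "z i 1 - p i = (1-t) *\<^sub>R (V - p i)" using t(3) by (simp add: algebra_simps)
      hence "p i + qq i 1 *\<^sub>R (z i 1 - p i) = p i + l *\<^sub>R (V - p i)" unfolding l_def by simp
      hence "p i + l *\<^sub>R (V - p i) \<in> epi f" using st4 by simp
      hence epiw: "f (y i + l *\<^sub>R (fst V - y i)) \<le> gam i + l * (snd V - gam i)"
        unfolding p_def epi_def by (cases V) simp
      have yG: "y i \<in> G 0" using st1[of i] Gsub[of i] by blast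
      have "norm (y i) \<le> B0" using B0 yG by blast
      hence ny: "norm (y i) \<le> R" unfolding R_def using abs_ge_self[of B0] norm_ge_zero[of "fst V"] by linarith
      have nv: "norm (fst V) \<le> R" unfolding R_def by simp
      have "norm (fst V - y i) \<le> norm (fst V) + norm (y i)" by (rule norm_triangle_ineq4)
      hence bx: "norm (fst V - y i) \<le> Bx" using ny nv unfolding Bx_def by linarith
      have bg: "\<bar>snd V - gam i\<bar> \<le> Bg" using gle[of i] gge[of i] unfolding Bg_def by arith
      have gap: "f (y i) - gam i > e" using s2 that by blast
      have "l \<ge> l0" unfolding l0_def
        by (rule step_lemma[OF d(2) ny nv gap epiw l bx bg]) (use R0 d e in \<open>auto simp: Bx_def Bg_def\<close>)
      hence "l0 / q \<le> 1 - t"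
      proof -
        assume "l \<ge> l0"
        have "l \<le> q * (1-t)" unfolding l_def using qq t by (simp add: mult_right_mono)
        hence "l0 \<le> q * (1-t)" using \<open>l \<ge> l0\<close> by linarith
        thus ?thesis using q by (simp add: field_simps)
      qed
      hence "c \<le> (1-t) * (r/2)" unfolding c_def using r(1) by (intro mult_right_mono) auto
      hence A1: "c \<le> inner (a i) (p i - z i 1)" using C1 by linarith
      have A2: "inner (a i) (p i' - z i 1) \<le> 0" if "i < i'" for i'
      proof -
        have "p i' \<in> M i'" unfolding p_def using st1[of i'] by blast
        hence "p i' \<in> M (Suc i)" using Mmono[of "Suc i" i'] \<open>i0 \<le> i\<close> that by auto
        thus ?thesis using st5b[of i] one aA by auto
      qed
      show ?thesis using A1 A2 by blast
    qed
    have far: "c \<le> dist (p i) (p i')" if "i0 \<le> i" "i < i'" for i i'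
    proof -
      have "c \<le> inner (a i) (p i - z i 1) - inner (a i) (p i' - z i 1)" using key[OF that(1)] that(2) by force
      also have "\<dots> = inner (a i) (p i - p i')" by (simp add: inner_diff_right)
      also have "\<dots> \<le> norm (a i) * norm (p i - p i')" by (rule norm_cauchy_schwarz)
      also have "norm (a i) = 1"
      proof -
        have "A i 1 \<noteq> {}" "A i 1 \<subseteq> W1 (z i 1) (epi f)" using st5a[OF one] by blast+
        moreover have "a i \<in> A i 1" unfolding a_def using \<open>A i 1 \<noteq> {}\<close> by (simp add: some_in_eq)
        ultimately have "a i \<in> W1 (z i 1) (epi f)" by blast
        thus ?thesis unfolding W1_def by simp
      qed
      finally show ?thesis by (simp add: dist_norm)
    qed
    define ps where "ps = (\<lambda>n. p (n + i0))"
    have "range ps \<subseteq> G 0 \<times> {gbar 0..fstar}"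
    proof (rule image_subsetI)
      fix n
      show "ps n \<in> G 0 \<times> {gbar 0..fstar}"
        using st1[of "n+i0"] Gsub[of "n+i0"] gle[of "n+i0"] gge[of "n+i0"] unfolding ps_def p_def by auto
    qed
    hence "bounded (range ps)"
      by (rule bounded_subset[OF bounded_Times[OF G0(3) bounded_closed_interval[of "gbar 0" fstar]]])
    then obtain l rr where rr: "strict_mono (rr::nat \<Rightarrow> nat)" "(ps \<circ> rr) \<longlonglongrightarrow> l"
      using bounded_imp_convergent_subsequence by blast
    hence "Cauchy (ps \<circ> rr)" using LIMSEQ_imp_Cauchy by blast
    then obtain N where N: "\<forall>mm\<ge>N. \<forall>n\<ge>N. dist ((ps \<circ> rr) mm) ((ps \<circ> rr) n) < c"
      using c unfolding Cauchy_def by blast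
    have "dist ((ps \<circ> rr) N) ((ps \<circ> rr) (Suc N)) < c" using N by simp
    moreover have "rr N < rr (Suc N)" using rr(1) by (simp add: strict_mono_def)
    ultimately show False using far[of "rr N + i0" "rr (Suc N) + i0"] unfolding ps_def by simp
  qed
  have hit: "\<exists>i. kk i = k \<and> kk (Suc i) = Suc k" for k
  proof -
    define i1 where "i1 = (LEAST i. k < kk i)"
    have h1: "k < kk i1" unfolding i1_def using unb by (meson LeastI)
    have "i1 \<noteq> 0"
    proof
      assume "i1 = 0" thus False using h1 kk0 by simp
    qed
    then obtain i where i: "i1 = Suc i" by (cases i1) auto
    have "i < (LEAST i. k < kk i)" using i i1_def by simp
    hence "\<not> k < kk i" by (rule not_less_Least)
    hence "kk i = k \<and> kk (Suc i) = Suc k" using h1 i kkS[of i] by auto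
    then show ?thesis by blast
  qed
  have bnd: "fstar \<le> f (x k) \<and> f (x k) \<le> fstar + eps k \<and> fstar - eps k \<le> sigma k \<and> sigma k \<le> fstar" for k
  proof -
    obtain i where i: "kk i = k" "kk (Suc i) = Suc k" using hit by blast
    have "\<not> (f (y i) - gam i > eps (kk i))" using st2[of i] i by auto
    hence s3: "x k \<in> G i \<and> f (x k) \<le> f (y i) \<and> sigma k = gam i \<and> f (y i) - gam i \<le> eps k"
      using st3[of i] i by auto
    hence "x k \<in> D" using Gsub G0 by blast
    hence "fstar \<le> f (x k)" using xstar by blast
    thus ?thesis using s3 gle[of i] fy[of i] by linarith
  qed
  have lim1: "(\<lambda>k. f (x k)) \<longlonglongrightarrow> fstar"
  proof (rule tendsto_sandwich[of "\<lambda>_. fstar" _ _ "\<lambda>k. fstar + eps k"])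
    show "(\<lambda>k. fstar + eps k) \<longlonglongrightarrow> fstar" using tendsto_add[OF tendsto_const eps_lim] by simp
  qed (use bnd in auto)
  have lim2: "sigma \<longlonglongrightarrow> fstar"
  proof (rule tendsto_sandwich[of "\<lambda>k. fstar - eps k" _ _ "\<lambda>_. fstar"])
    show "(\<lambda>k. fstar - eps k) \<longlonglongrightarrow> fstar" using tendsto_diff[OF tendsto_const eps_lim] by simp
  qed (use bnd in auto)
  show ?thesis using unb lim1 lim2 by blast
qed

end
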